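(* Let $p$ be an odd prime and $n,k$ positive integers with $\gcd(n,k)=s$. If $n/s$ is odd, then $\gcd(p^n-1,d)=1$ for $d=(p^{2k}+1)/2$ and for $d=p^{2k}-p^k+1$. *)

theory Defs
  imports "HOL-Computational_Algebra.Primes"
begin

end

theory Submission
  imports Defs "HOL-Number_Theory.Number_Theory"
begin

lemma gcd_aux:
  fixes n k s j :: nat
  assumes "s = gcd n k" "odd (n div s)" "n > 0"
  shows "gcd n (2^j * k) = s"
proof -
  have s0: "s > 0" using assms by simp
  obtain a b where ab: "n = a*s" "k = b*s" "coprime a b"
    using gcd_coprime_exists[of n k] assms s0 by force
  have "a = n div s" using ab s0 by simp
  hence "odd a" using assms by simp
  hence "coprime a (2^j*b)" using ab(3) by simp
  hence "gcd a (2^j*b) = 1" by simp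
  have "gcd n (2^j*k) = gcd (a*s) ((2^j*b)*s)" using ab by (simp add: mult.assoc)
  also have "\<dots> = gcd a (2^j*b) * s" by (metis gcd_mult_distrib_nat mult.commute)
  finally show ?thesis using \<open>gcd a (2^j*b) = 1\<close> by simp
qed

lemma cong_gcd_pow:
  fixes p g m l :: nat
  assumes "[p^m = 1] (mod g)" "[p^l = 1] (mod g)"
  shows "[p^(gcd m l) = 1] (mod g)"
  using assms by (simp add: ord_divides')

lemma cong_pow_dvd:
  fixes p g m l :: nat
  assumes "[p^m = 1] (mod g)" "m dvd l"
  shows "[p^l = 1] (mod g)"
  using assms by (metis dvd_trans ord_divides)

lemma dvd2_odd: "odd (g::nat) \<Longrightarrow> int g dvd 2 \<Longrightarrow> g = 1"
  by (metis dvd_antisym dvd_refl even_numeral int_dvd_int_iff nat_dvd_1_iff_1 of_nat_numeral prime_nat_iff two_is_prime_nat)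

theorem mainTheorem4:
  fixes p n k s :: nat
  assumes "prime p" and "odd p" and "n > 0" and "k > 0"
    and "s = gcd n k" and "odd (n div s)"
  shows "gcd (p ^ n - 1) ((p ^ (2 * k) + 1) div 2) = 1
       \<and> gcd (p ^ n - 1) (p ^ (2 * k) - p ^ k + 1) = 1"
proof -
  have p1: "p \<ge> 1" using assms(1) prime_gt_0_nat by (simp add: Suc_leI)
  have sk: "s dvd k" using assms by simp
  have pos: "p^m \<ge> 1" for m using p1 by simp
  define x where "x = p^k"
  have x2: "p^(2*k) = x^2" unfolding x_def by (simp add: power_mult mult.commute)
  have xo: "odd x" using assms(2) x_def by simp
  obtain t where t: "x = 2*t+1" using xo oddE by blast
  have gs: "gcd n (2*k) = s" using gcd_aux[of s n k 1] assms by simp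
  have gs4: "gcd n (4*k) = s" using gcd_aux[of s n k 2] assms by simp
  have ps: "[p^s = 1] (mod g) \<Longrightarrow> [p^k = 1] (mod g)" for g
    using cong_pow_dvd sk by blast
  show ?thesis
  proof
  define d where "d = (p ^ (2 * k) + 1) div 2"
  define g where "g = gcd (p ^ n - 1) d"
  have d2: "2*d = x^2+1" unfolding d_def x2 t by (simp add: power2_eq_square algebra_simps)
  have "d = 2*(t*t+t)+1" using d2 t by (simp add: power2_eq_square algebra_simps)
  hence "odd d" by simp
  have gd: "g dvd d" "g dvd p^n - 1" unfolding g_def by auto
  have godd: "odd g" using gd \<open>odd d\<close> by (meson dvd_trans)
  have c1: "[p^n = 1] (mod g)" using gd pos by (simp add: cong_altdef_nat)
  have "g dvd x^2+1" using gd(1) d2 dvd_mult[of g d 2] by simp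
  hence "int g dvd int x ^ 2 + 1" using int_dvd_int_iff[of g "x^2+1"] by (simp add: add.commute)
  hence c2: "[int x ^ 2 = -1] (mod int g)" by (simp add: cong_iff_dvd_diff)
  hence "[(int x ^ 2)^2 = (-1)^2] (mod int g)" by (rule cong_pow)
  hence "[int (p^(4*k)) = int 1] (mod int g)" unfolding x_def
    by (simp add: power_mult[symmetric] mult.commute)
  hence c4: "[p^(4*k) = 1] (mod g)" using cong_int_iff by blast
  have "[p^s = 1] (mod g)" using cong_gcd_pow[OF c1 c4] gs4 by simp
  hence "[x = 1] (mod g)" using ps x_def by simp
  hence "[int x = 1] (mod int g)" using cong_int_iff[of x 1 g] by simp
  hence "[int x ^ 2 = 1] (mod int g)" using cong_pow by fastforce
  hence "[1 = -1] (mod int g)" using c2 by (meson cong_sym cong_trans)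
  hence "int g dvd 2" by (simp add: cong_iff_dvd_diff)
  hence "g = 1" using godd dvd2_odd by blast
  thus "gcd (p ^ n - 1) ((p ^ (2 * k) + 1) div 2) = 1" using g_def d_def by simp
next
  define d where "d = x^2 - x + 1"
  define g where "g = gcd (p ^ n - 1) d"
  have xx: "x^2 = x + 2*(t*(2*t+1))" unfolding t by (simp add: power2_eq_square algebra_simps)
  have hd: "d = 2*(t*(2*t+1)) + 1" unfolding d_def xx by simp
  hence "odd d" by simp
  have ix: "int x ^ 2 = int x + int (2*(t*(2*t+1)))" using arg_cong[OF xx, of int] by simp
  have gd: "g dvd d" "g dvd p^n - 1" unfolding g_def by auto
  have godd: "odd g" using gd \<open>odd d\<close> by (meson dvd_trans)
  have c1: "[p^n = 1] (mod g)" using gd pos by (simp add: cong_altdef_nat)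
  have "int d = int x ^ 2 - int x + 1" using hd ix by simp
  hence "int g dvd int x ^ 2 - int x + 1" using gd(1) int_dvd_int_iff[of g d] by simp
  hence "int g dvd (int x + 1) * (int x ^ 2 - int x + 1)" by (rule dvd_mult)
  hence "int g dvd int x ^ 3 + 1" by (simp add: algebra_simps power2_eq_square power3_eq_cube)
  hence c2: "[int x ^ 3 = -1] (mod int g)" by (simp add: cong_iff_dvd_diff)
  hence "[(int x ^ 3)^2 = (-1)^2] (mod int g)" by (rule cong_pow)
  hence "[int (p^(6*k)) = int 1] (mod int g)" unfolding x_def
    by (simp add: power_mult[symmetric] mult.commute)
  hence c6: "[p^(6*k) = 1] (mod g)" using cong_int_iff by blast
  have c3: "[p^(3*n) = 1] (mod g)" using cong_pow_dvd[OF c1] by simp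
  have "gcd (3*n) (6*k) = 3*s" using gs gcd_mult_distrib_nat[of 3 n "2*k"] by simp
  hence "[p^(3*s) = 1] (mod g)" using cong_gcd_pow[OF c3 c6] by simp
  hence "[p^(3*k) = 1] (mod g)" using cong_pow_dvd sk by (meson mult_dvd_mono dvd_refl)
  hence "[int (p^(3*k)) = int 1] (mod int g)" using cong_int_iff by blast
  hence "[int x ^ 3 = 1] (mod int g)" unfolding x_def by (simp add: power_mult[symmetric] mult.commute)
  hence "[1 = -1] (mod int g)" using c2 by (meson cong_sym cong_trans)
  hence "int g dvd 2" by (simp add: cong_iff_dvd_diff)
  hence "g = 1" using godd dvd2_odd by blast
  thus "gcd (p ^ n - 1) (p ^ (2 * k) - p ^ k + 1) = 1" using g_def d_def x2 x_def by simp
  qed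
qed
end
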